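(* Let $G=(V,E)$ be a connected undirected graph whose vertices are labelled by distinct integers, and orient each edge $\{u,v\}\in E$ from $u$ to $v$ if $v>u$ (and from $v$ to $u$ otherwise). Fix a vertex $k\in V$ and let $H=(V',E')$ be the undirected graph with vertex set $V'=\{s,t\}\cup\{v_b : v\in V,\ b\in\{0,1,2\}\}$ and edge set $$E'=\{(u_b,v_{(b+1)\bmod 3}) : (u,v)\text{ a directed edge of }G,\ b\in\{0,1,2\}\}\cup\{(s,k_0),(t,k_1)\}.$$ Then there is a path from $s$ to $t$ in $H$ if and only if $G$ contains a cycle such that the difference $D:=p-q$ between its number $p$ of clockwise edges and its number $q$ of anticlockwise edges satisfies $D\not\equiv 0 \pmod 3$. Furthermore, if $k$ is a vertex on such a cycle, then the path between $s$ and $t$ in $H$ can be taken to have length at most $2c+2$, where $c$ is the length of the cycle.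
   Context: Clockwise/anticlockwise edges of a cycle in the oriented graph $G$: choose a vertex $v$ of the cycle having at least one outgoing edge (with respect to the orientation above) that belongs to the cycle, and traverse the cycle from $v$ back to $v$ starting along such an outgoing edge. An edge of the cycle is clockwise if its orientation agrees with the direction of traversal and anticlockwise otherwise. (The condition $D\not\equiv 0 \pmod 3$ does not depend on the traversal direction.) *)

theory Defs
  imports Main
begin

definition ugraph :: "'a set \<Rightarrow> 'a set set \<Rightarrow> bool" where
  "ugraph V E \<longleftrightarrow> (\<forall>e\<in>E. \<exists>u v. e = {u, v} \<and> u \<noteq> v \<and> u \<in> V \<and> v \<in> V)"

text \<open>Walk: nonempty vertex list, consecutive vertices adjacent. Length = number of edges.\<close>
definition is_walk :: "'a set \<Rightarrow> 'a set set \<Rightarrow> 'a list \<Rightarrow> bool" where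
  "is_walk V E xs \<longleftrightarrow> xs \<noteq> [] \<and> set xs \<subseteq> V \<and>
     (\<forall>i. i + 1 < length xs \<longrightarrow> {xs ! i, xs ! (i + 1)} \<in> E)"

definition is_path :: "'a set \<Rightarrow> 'a set set \<Rightarrow> 'a list \<Rightarrow> bool" where
  "is_path V E xs \<longleftrightarrow> is_walk V E xs \<and> distinct xs"

definition connected_graph :: "'a set \<Rightarrow> 'a set set \<Rightarrow> bool" where
  "connected_graph V E \<longleftrightarrow>
     (\<forall>u\<in>V. \<forall>v\<in>V. \<exists>xs. is_walk V E xs \<and> hd xs = u \<and> last xs = v)"

definition is_cycle :: "'a set \<Rightarrow> 'a set set \<Rightarrow> 'a list \<Rightarrow> bool" where
  "is_cycle V E cs \<longleftrightarrow> length cs \<ge> 3 \<and> distinct cs \<and> set cs \<subseteq> V \<and>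
     (\<forall>i<length cs. {cs ! i, cs ! ((i + 1) mod length cs)} \<in> E)"

text \<open>D = p - q for the traversal v_0 -> v_1 -> ... -> v_{n-1} -> v_0: an edge is
  clockwise iff it is oriented (from smaller to larger label) along the traversal.\<close>
definition cycle_D :: "int list \<Rightarrow> int" where
  "cycle_D cs = (\<Sum>i<length cs. if cs ! i < cs ! ((i + 1) mod length cs) then 1 else -1)"

datatype hvert = Src | Tgt | Cp int nat

definition H_verts :: "int set \<Rightarrow> hvert set" where
  "H_verts V = {Src, Tgt} \<union> {Cp v b | v b. v \<in> V \<and> b < 3}"

definition H_edges :: "int set set \<Rightarrow> int \<Rightarrow> hvert set set" where
  "H_edges E k = {{Cp u b, Cp v ((b + 1) mod 3)} | u v b. {u, v} \<in> E \<and> u < v \<and> b < 3}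
     \<union> {{Src, Cp k 0}, {Tgt, Cp k 1}}"

end

theory Submission
  imports Defs
begin

definition volt :: "int \<Rightarrow> int \<Rightarrow> int" where "volt x y = (if x < y then 1 else -1)"

fun gw :: "'a set set \<Rightarrow> 'a list \<Rightarrow> bool" where
  "gw E (x#y#xs) = ({x,y} \<in> E \<and> gw E (y#xs))"
| "gw E _ = True"

fun wsum :: "int list \<Rightarrow> int" where
  "wsum (x#y#xs) = volt x y + wsum (y#xs)"
| "wsum _ = 0"

lemma gw_Cons: "gw E (x#ys) \<longleftrightarrow> (ys = [] \<or> ({x, hd ys} \<in> E \<and> gw E ys))"
  by (cases ys) auto

lemma wsum_Cons: "wsum (x#ys) = (if ys = [] then 0 else volt x (hd ys) + wsum ys)"
  by (cases ys) auto

definition glue :: "'a list \<Rightarrow> 'a list \<Rightarrow> 'a list" where "glue xs ys = xs @ tl ys"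

lemma glue_props:
  assumes "xs \<noteq> []" "ys \<noteq> []" "last xs = hd ys"
  shows "(gw E (glue xs ys) \<longleftrightarrow> gw E xs \<and> gw E ys) \<and>
    hd (glue xs ys) = hd xs \<and> last (glue xs ys) = last ys \<and> set (glue xs ys) = set xs \<union> set ys
    \<and> length (glue xs ys) = length xs + length ys - 1"
  using assms
proof (induction xs)
  case Nil then show ?case by simp
next
  case (Cons x xs)
  show ?case
  proof (cases xs)
    case Nil
    then have "glue (x#xs) ys = ys" using Cons.prems by (cases ys) (auto simp: glue_def)
    then show ?thesis using Nil Cons.prems by (cases ys) auto
  next
    case (Cons x' xs')
    then have IH: "(gw E (glue xs ys) \<longleftrightarrow> gw E xs \<and> gw E ys) \<and>
    hd (glue xs ys) = hd xs \<and> last (glue xs ys) = last ys \<and> set (glue xs ys) = set xs \<union> set ys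
    \<and> length (glue xs ys) = length xs + length ys - 1" using Cons.IH Cons.prems by auto
    have g: "glue (x#xs) ys = x # glue xs ys" by (simp add: glue_def)
    have ne: "glue xs ys \<noteq> []" using Cons by (simp add: glue_def)
    show ?thesis unfolding g using IH ne Cons Cons.prems by (auto simp: gw_Cons)
  qed
qed

lemma glue_wsum:
  assumes "xs \<noteq> []" "ys \<noteq> []" "last xs = hd ys"
  shows "wsum (glue xs ys) = wsum xs + wsum ys"
  using assms
proof (induction xs)
  case Nil then show ?case by simp
next
  case (Cons x xs)
  show ?case
  proof (cases xs)
    case Nil
    then have "glue (x#xs) ys = ys" using Cons.prems by (cases ys) (auto simp: glue_def)
    then show ?thesis using Nil Cons.prems by (cases ys) auto
  next
    case (Cons x' xs')
    then have IH: "wsum (glue xs ys) = wsum xs + wsum ys" using Cons.IH Cons.prems by auto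
    have g: "glue (x#xs) ys = x # glue xs ys" by (simp add: glue_def)
    have ne: "glue xs ys \<noteq> []" and h: "hd (glue xs ys) = hd xs" using Cons by (auto simp add: glue_def)
    show ?thesis unfolding g using IH ne h Cons by (auto simp: wsum_Cons)
  qed
qed

lemma gw_iff_nth: "gw E xs \<longleftrightarrow> (\<forall>i. i+1 < length xs \<longrightarrow> {xs!i, xs!(i+1)} \<in> E)"
proof (induction E xs rule: gw.induct)
  case (1 E x y xs)
  show ?case
  proof
    assume "gw E (x # y # xs)"
    then show "\<forall>i. i+1 < length (x#y#xs) \<longrightarrow> {(x#y#xs)!i, (x#y#xs)!(i+1)} \<in> E"
      using 1 by (auto simp: nth_Cons split: nat.splits)
  next
    assume a: "\<forall>i. i+1 < length (x#y#xs) \<longrightarrow> {(x#y#xs)!i, (x#y#xs)!(i+1)} \<in> E"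
    have "{x,y} \<in> E" using a[rule_format, of 0] by simp
    moreover have "\<forall>i. i+1 < length (y#xs) \<longrightarrow> {(y#xs)!i, (y#xs)!(i+1)} \<in> E"
    proof (intro allI impI)
      fix i assume "i+1 < length (y#xs)"
      then show "{(y#xs)!i, (y#xs)!(i+1)} \<in> E" using a[rule_format, of "Suc i"] by simp
    qed
    ultimately show "gw E (x # y # xs)" using 1 by simp
  qed
qed auto

lemma wsum_nth: "wsum xs = (\<Sum>i<length xs - 1. volt (xs!i) (xs!Suc i))"
proof (induction xs rule: wsum.induct)
  case (1 x y xs)
  then show ?case by (simp add: sum.lessThan_Suc_shift del: sum.lessThan_Suc)
qed auto

lemma is_walk_iff: "is_walk V E xs \<longleftrightarrow> xs \<noteq> [] \<and> set xs \<subseteq> V \<and> gw E xs"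
  unfolding is_walk_def gw_iff_nth by auto

lemma edge_ne: "ugraph V E \<Longrightarrow> {x,y} \<in> E \<Longrightarrow> x \<noteq> y \<and> x \<in> V \<and> y \<in> V"
  unfolding ugraph_def by (fastforce simp: doubleton_eq_iff)

lemma nth_close:
  assumes "cs \<noteq> []" "i < length cs"
  shows "(cs @ [hd cs]) ! i = cs ! i \<and> (cs @ [hd cs]) ! Suc i = cs ! ((i+1) mod length cs)"
proof (cases "Suc i < length cs")
  case True then show ?thesis using assms by (simp add: nth_append)
next
  case False
  then have "Suc i = length cs" using assms by simp
  then show ?thesis using assms by (simp add: nth_append hd_conv_nth)
qed

lemma cycle_D_wsum: "cs \<noteq> [] \<Longrightarrow> cycle_D cs = wsum (cs @ [hd cs])"
  unfolding cycle_D_def wsum_nth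
  by (rule sum.cong) (auto simp: nth_close volt_def)

lemma cycle_gw: "cs \<noteq> [] \<Longrightarrow> gw E (cs @ [hd cs]) \<longleftrightarrow> (\<forall>i<length cs. {cs!i, cs!((i+1) mod length cs)} \<in> E)"
  unfolding gw_iff_nth by (auto simp: nth_close)

lemma closed_cycle:
  assumes ug: "ugraph V E"
  shows "gw E xs \<Longrightarrow> set xs \<subseteq> V \<Longrightarrow> xs \<noteq> [] \<Longrightarrow> hd xs = last xs \<Longrightarrow> wsum xs mod 3 \<noteq> 0
    \<Longrightarrow> \<exists>cs. is_cycle V E cs \<and> cycle_D cs mod 3 \<noteq> 0"
proof (induction "length xs" arbitrary: xs rule: less_induct)
  case less
  show ?case
  proof (cases "distinct (butlast xs)")
    case False
    then obtain a y m b where bl: "butlast xs = a @ [y] @ m @ [y] @ b" using not_distinct_decomp by blast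
    have xs: "xs = a @ [y] @ m @ [y] @ b @ [last xs]"
      using bl less.prems(3) append_butlast_last_id by (metis append.assoc)
    define A where "A = a @ [y]"
    define X1 where "X1 = y # m @ [y]"
    define Bb where "Bb = y # b @ [last xs]"
    have l1: "last A = hd X1" and n1: "A \<noteq> []" "X1 \<noteq> []" "Bb \<noteq> []"
      by (auto simp: A_def X1_def Bb_def)
    have gA: "glue A X1 = a @ [y] @ m @ [y]" by (simp add: glue_def A_def X1_def)
    have l2: "last (glue A X1) = hd Bb" unfolding gA by (simp add: Bb_def)
    have e1: "xs = glue (glue A X1) Bb" using xs unfolding gA by (simp add: glue_def Bb_def)
    have ne2: "glue A X1 \<noteq> []" unfolding gA by simp
    note P1 = glue_props[OF n1(1,2) l1, of E]
    note P2 = glue_props[OF ne2 n1(3) l2, of E]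
    have ws: "wsum xs = wsum A + wsum X1 + wsum Bb"
      using e1 glue_wsum[OF n1(1,2) l1] glue_wsum[OF ne2 n1(3) l2] by simp
    have gall: "gw E A" "gw E X1" "gw E Bb" using less.prems(1) e1 P1 P2 by auto
    have sall: "set A \<subseteq> V" "set X1 \<subseteq> V" "set Bb \<subseteq> V" using less.prems(2) e1 P1 P2 by auto
    define X2 where "X2 = glue A Bb"
    have l3: "last A = hd Bb" by (simp add: A_def Bb_def)
    note P3 = glue_props[OF n1(1,3) l3, of E]
    have ws2: "wsum X2 = wsum A + wsum Bb" unfolding X2_def using glue_wsum[OF n1(1,3) l3] .
    have len1: "length X1 < length xs" using arg_cong[OF xs, of length] by (simp add: X1_def)
    have len2: "length X2 < length xs" using P3 arg_cong[OF xs, of length] by (simp add: X2_def A_def Bb_def)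
    have "wsum X1 mod 3 \<noteq> 0 \<or> wsum X2 mod 3 \<noteq> 0"
      using less.prems(5) ws ws2 by presburger
    then show ?thesis
    proof
      assume "wsum X1 mod 3 \<noteq> 0"
      then show ?thesis using less.hyps[OF len1] gall sall n1 by (simp add: X1_def)
    next
      assume w: "wsum X2 mod 3 \<noteq> 0"
      have "hd X2 = last X2" using P3 less.prems(4) e1 P1 P2 by (simp add: X2_def)
      moreover have "X2 \<noteq> []" using n1 by (simp add: X2_def glue_def)
      moreover have "set X2 \<subseteq> V" "gw E X2" using P3 gall sall by (auto simp: X2_def)
      ultimately show ?thesis using w by (intro less.hyps[OF len2]) auto
    qed
  next
    case True
    define cs where "cs = butlast xs"
    obtain l where xs: "xs = cs @ [l]" using less.prems(3) by (metis append_butlast_last_id cs_def)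
    have dcs: "distinct cs" using True by (simp add: cs_def)
    have g: "gw E (cs @ [l])" and sV: "set (cs @ [l]) \<subseteq> V" and hl: "hd (cs @ [l]) = l"
      and w: "wsum (cs @ [l]) mod 3 \<noteq> 0"
      using less.prems xs by simp_all
    show ?thesis
    proof (cases "length cs \<ge> 3")
      case True
      then have ne: "cs \<noteq> []" by auto
      have lh: "l = hd cs" using hl ne by simp
      have "is_cycle V E cs" unfolding is_cycle_def
        using True dcs g sV cycle_gw[OF ne, of E] lh by auto
      moreover have "cycle_D cs mod 3 \<noteq> 0" using cycle_D_wsum[OF ne] w lh by simp
      ultimately show ?thesis by blast
    next
      case False
      then have "cs = [] \<or> (\<exists>x. cs = [x]) \<or> (\<exists>x z. cs = [x,z])"
        by (auto simp: length_Suc_conv numeral_3_eq_3 not_le less_Suc_eq)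
      moreover have "cs \<noteq> []"
      proof
        assume "cs = []"
        then show False using w by simp
      qed
      moreover have "\<not> (\<exists>x. cs = [x])"
      proof
        assume "\<exists>x. cs = [x]"
        then obtain x where "cs = [x]" by blast
        then have "{x,x} \<in> E" using g hl by simp
        then show False using edge_ne[OF ug, of x x] by simp
      qed
      moreover have "\<not> (\<exists>x z. cs = [x,z])"
      proof
        assume "\<exists>x z. cs = [x,z]"
        then obtain x z where c2: "cs = [x,z]" by blast
        then have "{x,z} \<in> E" "l = x" using g hl by simp_all
        then have "x \<noteq> z" "l = x" using edge_ne[OF ug, of x z] by simp_all
        then have "wsum (cs @ [l]) = 0" using c2 by (auto simp: volt_def)
        then show False using w by simp
      qed
      ultimately show ?thesis by blast
    qed
  qed
qed

lemma walk_path: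
  "gw F xs \<Longrightarrow> xs \<noteq> [] \<Longrightarrow> \<exists>ys. gw F ys \<and> distinct ys \<and> ys \<noteq> [] \<and> hd ys = hd xs \<and> last ys = last xs
     \<and> set ys \<subseteq> set xs \<and> length ys \<le> length xs"
proof (induction "length xs" arbitrary: xs rule: less_induct)
  case less
  show ?case
  proof (cases "distinct xs")
    case True then show ?thesis using less.prems by blast
  next
    case False
    then obtain a y m b where xs: "xs = a @ [y] @ m @ [y] @ b" using not_distinct_decomp by blast
    define A where "A = a @ [y]"
    define X1 where "X1 = y # m @ [y]"
    define Bb where "Bb = y # b"
    have l1: "last A = hd X1" and n1: "A \<noteq> []" "X1 \<noteq> []" "Bb \<noteq> []"
      by (auto simp: A_def X1_def Bb_def)
    have gA: "glue A X1 = a @ [y] @ m @ [y]" by (simp add: glue_def A_def X1_def)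
    have l2: "last (glue A X1) = hd Bb" unfolding gA by (simp add: Bb_def)
    have e1: "xs = glue (glue A X1) Bb" using xs unfolding gA by (simp add: glue_def Bb_def)
    have ne2: "glue A X1 \<noteq> []" unfolding gA by simp
    note P1 = glue_props[OF n1(1,2) l1, of F]
    note P2 = glue_props[OF ne2 n1(3) l2, of F]
    have l3: "last A = hd Bb" by (simp add: A_def Bb_def)
    note P3 = glue_props[OF n1(1,3) l3, of F]
    define X2 where "X2 = glue A Bb"
    have len2: "length X2 < length xs" using P3 xs by (simp add: X2_def A_def Bb_def)
    have "gw F X2" "X2 \<noteq> []" using P3 P1 P2 e1 less.prems by (auto simp: X2_def A_def)
    then obtain ys where ys: "gw F ys \<and> distinct ys \<and> ys \<noteq> [] \<and> hd ys = hd X2 \<and> last ys = last X2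
     \<and> set ys \<subseteq> set X2 \<and> length ys \<le> length X2" using less.hyps[OF len2] by blast
    have "hd X2 = hd xs" "last X2 = last xs" "set X2 \<subseteq> set xs"
      using P3 P1 P2 e1 by (auto simp: X2_def)
    then show ?thesis using ys len2 by (intro exI[of _ ys]) auto
  qed
qed

lemma H_step:
  assumes ug: "ugraph V E" and e: "{x,y} \<in> E" and b: "b < (3::nat)"
  shows "{Cp x b, Cp y (nat ((int b + volt x y) mod 3))} \<in> H_edges E k"
proof (cases "x < y")
  case True
  have v: "volt x y = 1" using True by (simp add: volt_def)
  have "int ((b + 1) mod 3) = (int b + 1) mod 3" by (simp add: zmod_int ac_simps)
  then have "nat ((int b + volt x y) mod 3) = (b + 1) mod 3" using v by (metis nat_int)
  then show ?thesis using True e b unfolding H_edges_def by auto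
next
  case False
  then have yx: "y < x" using edge_ne[OF ug e] by auto
  define c where "c = nat ((int b + volt x y) mod 3)"
  have v: "volt x y = -1" using False by (simp add: volt_def)
  have "b = 0 \<or> b = 1 \<or> b = 2" using b by auto
  then have c: "c < 3" "(c + 1) mod 3 = b" by (auto simp: c_def v)
  have "{y,x} \<in> E" using e by (simp add: insert_commute)
  then have "{Cp y c, Cp x ((c + 1) mod 3)} \<in> H_edges E k" using yx c unfolding H_edges_def by blast
  then show ?thesis using c by (simp add: c_def insert_commute)
qed

fun lift :: "int list \<Rightarrow> nat \<Rightarrow> hvert list" where
  "lift [] b = []"
| "lift [x] b = [Cp x b]"
| "lift (x#y#xs) b = Cp x b # lift (y#xs) (nat ((int b + volt x y) mod 3))"

lemma lift_props:
  assumes ug: "ugraph V E"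
  shows "gw E xs \<Longrightarrow> set xs \<subseteq> V \<Longrightarrow> b < 3 \<Longrightarrow> gw (H_edges E k) (lift xs b) \<and> set (lift xs b) \<subseteq> H_verts V
    \<and> length (lift xs b) = length xs \<and> (xs \<noteq> [] \<longrightarrow> hd (lift xs b) = Cp (hd xs) b
    \<and> last (lift xs b) = Cp (last xs) (nat ((int b + wsum xs) mod 3)))"
proof (induction xs b rule: lift.induct)
  case (1 b) then show ?case by simp
next
  case (2 x b) then show ?case by (auto simp: H_verts_def)
next
  case (3 x y xs b)
  define b' where "b' = nat ((int b + volt x y) mod 3)"
  have b': "b' < 3" "int b' = (int b + volt x y) mod 3" by (simp_all add: b'_def)
  have IH: "gw (H_edges E k) (lift (y#xs) b') \<and> set (lift (y#xs) b') \<subseteq> H_verts V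
    \<and> length (lift (y#xs) b') = length (y#xs) \<and> hd (lift (y#xs) b') = Cp y b'
    \<and> last (lift (y#xs) b') = Cp (last (y#xs)) (nat ((int b' + wsum (y#xs)) mod 3))"
    using 3 b' by (simp add: b'_def)
  have ed: "{Cp x b, Cp y b'} \<in> H_edges E k" unfolding b'_def using H_step[OF ug _ \<open>b<3\<close>] 3(2) by simp
  have ne: "lift (y#xs) b' \<noteq> []" using IH by auto
  have lst: "(int b' + wsum (y#xs)) mod 3 = (int b + wsum (x#y#xs)) mod 3"
    using b'(2) by (simp add: mod_add_left_eq add.assoc)
  show ?case using IH ed ne lst 3(3,4) by (auto simp: b'_def[symmetric] gw_Cons H_verts_def)
qed

lemma H_edge_inv:
  assumes "{Cp a c, Cp a' c'} \<in> H_edges E k"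
  shows "{a,a'} \<in> E \<and> int c' mod 3 = (int c + volt a a') mod 3"
proof -
  from assms obtain u v b where h: "{Cp a c, Cp a' c'} = {Cp u b, Cp v ((b + 1) mod 3)}"
    "{u,v} \<in> E" "u < v" "b < 3"
    unfolding H_edges_def by (auto simp: doubleton_eq_iff)
  from h(1) have "(a = u \<and> c = b \<and> a' = v \<and> c' = (b+1) mod 3) \<or> (a = v \<and> c = (b+1) mod 3 \<and> a' = u \<and> c' = b)"
    by (auto simp: doubleton_eq_iff)
  then show ?thesis
  proof
    assume "a = u \<and> c = b \<and> a' = v \<and> c' = (b+1) mod 3"
    then show ?thesis using h by (simp add: volt_def zmod_int add.commute)
  next
    assume H: "a = v \<and> c = (b+1) mod 3 \<and> a' = u \<and> c' = b"
    have "b = 0 \<or> b = 1 \<or> b = 2" using h(4) by auto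
    then show ?thesis using H h by (auto simp: volt_def insert_commute)
  qed
qed

fun proj :: "hvert \<Rightarrow> int" where "proj (Cp v c) = v" | "proj _ = 0"
fun bc :: "hvert \<Rightarrow> nat" where "bc (Cp v c) = c" | "bc _ = 0"

lemma proj_props:
  "gw (H_edges E k) q \<Longrightarrow> (\<forall>z\<in>set q. \<exists>v c. z = Cp v c) \<Longrightarrow> q \<noteq> [] \<Longrightarrow>
    gw E (map proj q) \<and> int (bc (last q)) mod 3 = (int (bc (hd q)) + wsum (map proj q)) mod 3"
proof (induction "H_edges E k" q rule: gw.induct)
  case (1 x y xs)
  obtain a c where x: "x = Cp a c" using 1(3) by auto
  obtain a' c' where y: "y = Cp a' c'" using 1(3) by auto
  have IH: "gw E (map proj (y#xs)) \<and> int (bc (last (y#xs))) mod 3 = (int c' + wsum (map proj (y#xs))) mod 3"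
    using 1 y by auto
  have e: "{a,a'} \<in> E \<and> int c' mod 3 = (int c + volt a a') mod 3"
    using H_edge_inv 1(2) x y by auto
  have "(int c' + wsum (map proj (y#xs))) mod 3 = (int c + volt a a' + wsum (map proj (y#xs))) mod 3"
    using e by (metis mod_add_left_eq)
  then show ?case using IH e x y by (simp add: add.assoc)
next
  case ("2_1") then show ?case by simp
next
  case ("2_2" v) then show ?case by (auto simp: zmod_int)
qed

lemma rev_walk:
  assumes ug: "ugraph V E"
  shows "gw E P \<Longrightarrow> gw E (rev P) \<and> wsum (rev P) = - wsum P"
proof (induction P rule: induct_list012)
  case (3 x y xs)
  have ne: "rev (y#xs) \<noteq> []" "[y,x] \<noteq> []" and l: "last (rev (y#xs)) = hd [y,x]" by simp_all
  have r: "rev (x#y#xs) = glue (rev (y#xs)) [y,x]" by (simp add: glue_def)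
  have e: "{x,y} \<in> E" "gw E (y#xs)" using 3 by auto
  have xy: "x \<noteq> y" using edge_ne[OF ug e(1)] by simp
  have IH: "gw E (rev (y#xs)) \<and> wsum (rev (y#xs)) = - wsum (y#xs)" using 3 e by simp
  have "gw E [y,x]" using e by (simp add: insert_commute)
  moreover have "wsum [y,x] = - volt x y" using xy by (auto simp: volt_def)
  ultimately show ?case unfolding r using glue_props[OF ne l, of E] glue_wsum[OF ne l] IH by simp
qed auto

lemma cyc_walk:
  assumes cy: "is_cycle V E cs" and D: "cycle_D cs mod 3 \<noteq> 0" and x: "x \<in> set cs"
  shows "\<exists>W. gw E W \<and> set W \<subseteq> V \<and> W \<noteq> [] \<and> hd W = x \<and> last W = x \<and> wsum W mod 3 = 1
           \<and> length W \<le> 2 * length cs + 1"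
proof -
  have ne: "cs \<noteq> []" using cy by (auto simp: is_cycle_def)
  define C where "C = cs @ [hd cs]"
  have gC: "gw E C" using cy cycle_gw[OF ne, of E] by (simp add: is_cycle_def C_def)
  have wC: "wsum C = cycle_D cs" using cycle_D_wsum[OF ne] by (simp add: C_def)
  obtain j where j: "j < length cs" "x = cs ! j" using x by (metis in_set_conv_nth)
  define A where "A = take (j+1) cs"
  define B where "B = drop j cs @ [hd cs]"
  have nA: "A \<noteq> []" and nB: "B \<noteq> []" using ne j by (auto simp: A_def B_def)
  have lA: "last A = cs ! j" using j by (simp add: A_def take_Suc_conv_app_nth)
  have hB: "hd B = cs ! j" using j by (simp add: B_def hd_drop_conv_nth)
  have l1: "last A = hd B" using lA hB by simp
  have dd: "tl (drop j cs) = drop (Suc j) cs" by (simp add: drop_Suc tl_drop)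
  have CAB: "C = glue A B" using j dd
    by (simp add: C_def A_def B_def glue_def del: drop_Suc)
  note P1 = glue_props[OF nA nB l1, of E]
  have gA: "gw E A" and gB: "gw E B" using P1 gC CAB by auto
  have wAB: "wsum A + wsum B = cycle_D cs" using glue_wsum[OF nA nB l1] CAB wC by simp
  have l2: "last B = hd A" using ne by (simp add: B_def A_def hd_conv_nth)
  define R where "R = glue B A"
  note P2 = glue_props[OF nB nA l2, of E]
  have gR: "gw E R" using P2 gA gB by (simp add: R_def)
  have wR: "wsum R = cycle_D cs" using glue_wsum[OF nB nA l2] wAB by (simp add: R_def)
  have sA: "set A \<subseteq> set cs" by (simp add: A_def set_take_subset)
  have sB: "set B \<subseteq> set cs" using ne set_drop_subset[of j cs] by (auto simp: B_def)
  have sR: "set R \<subseteq> V" using P2 cy sA sB by (auto simp: R_def is_cycle_def)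
  have hR: "hd R = x" and lR: "last R = x" using P2 hB lA j by (simp_all add: R_def)
  have nR: "R \<noteq> []" using nB by (simp add: R_def glue_def)
  have lenR: "length R = length cs + 1" using P2 j by (simp add: R_def A_def B_def)
  have "cycle_D cs mod 3 = 1 \<or> cycle_D cs mod 3 = 2" using D by presburger
  then show ?thesis
  proof
    assume "cycle_D cs mod 3 = 1"
    then show ?thesis using gR sR hR lR nR lenR wR by (intro exI[of _ R]) auto
  next
    assume d2: "cycle_D cs mod 3 = 2"
    have l3: "last R = hd R" using hR lR by simp
    note P3 = glue_props[OF nR nR l3, of E]
    have "wsum (glue R R) = 2 * cycle_D cs" using glue_wsum[OF nR nR l3] wR by simp
    then have "wsum (glue R R) mod 3 = 1" using d2 by presburger
    moreover have "glue R R \<noteq> []" using nR by (simp add: glue_def)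
    ultimately show ?thesis using P3 gR sR hR lR lenR by (intro exI[of _ "glue R R"]) auto
  qed
qed

lemma H_path:
  assumes ug: "ugraph V E" and W: "gw E W" "set W \<subseteq> V" "W \<noteq> []" "hd W = k" "last W = k" "wsum W mod 3 = 1"
  shows "\<exists>p. is_path (H_verts V) (H_edges E k) p \<and> hd p = Src \<and> last p = Tgt \<and> length p \<le> length W + 2"
proof -
  define L where "L = lift W 0"
  have LP: "gw (H_edges E k) L \<and> set L \<subseteq> H_verts V \<and> length L = length W \<and> hd L = Cp k 0
    \<and> last L = Cp k 1" using lift_props[OF ug W(1,2), of 0 k] W by (simp add: L_def)
  have nL: "L \<noteq> []" using LP W(3) by auto
  have l1: "last L = hd [Cp k 1, Tgt]" using LP by simp
  have g1: "gw (H_edges E k) [Cp k 1, Tgt]" by (simp add: H_edges_def insert_commute)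
  define q where "q = Src # glue L [Cp k 1, Tgt]"
  note P = glue_props[OF nL _ l1, of "H_edges E k", simplified]
  have gq: "gw (H_edges E k) q" using P LP g1 nL
    by (auto simp: q_def gw_Cons H_edges_def)
  have kV: "k \<in> V" using W by auto
  have sq: "set q \<subseteq> H_verts V" using P LP kV by (auto simp: q_def H_verts_def)
  have hq: "hd q = Src" and lq: "last q = Tgt" using P nL by (auto simp: q_def glue_def)
  have len: "length q = length W + 2" using P LP by (simp add: q_def)
  obtain p where p: "gw (H_edges E k) p \<and> distinct p \<and> p \<noteq> [] \<and> hd p = hd q \<and> last p = last q
     \<and> set p \<subseteq> set q \<and> length p \<le> length q" using walk_path[OF gq] by (auto simp: q_def)
  then show ?thesis using sq hq lq len by (intro exI[of _ p]) (auto simp: is_path_def is_walk_iff)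
qed

lemma Src_edge: "{Src, z} \<in> H_edges E k \<Longrightarrow> z = Cp k 0"
  unfolding H_edges_def by (auto simp: doubleton_eq_iff)

lemma Tgt_edge: "{z, Tgt} \<in> H_edges E k \<Longrightarrow> z = Cp k 1"
  unfolding H_edges_def by (auto simp: doubleton_eq_iff)

lemma H_to_G:
  assumes ug: "ugraph V E" and p: "is_path (H_verts V) (H_edges E k) p" "hd p = Src" "last p = Tgt"
  shows "\<exists>cs. is_cycle V E cs \<and> cycle_D cs mod 3 \<noteq> 0"
proof -
  have gp: "gw (H_edges E k) p" "set p \<subseteq> H_verts V" "distinct p" "p \<noteq> []"
    using p by (auto simp: is_path_def is_walk_iff)
  have p1: "p = Src # tl p" using gp(4) p(2) by (cases p) auto
  have rne: "tl p \<noteq> []" using p1 p(3) by (metis hvert.distinct(1) last.simps)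
  define q where "q = butlast (tl p)"
  have p2: "p = Src # q @ [Tgt]" using p1 rne p(3) by (metis q_def append_butlast_last_id last_tl)
  have qne: "q \<noteq> []"
  proof
    assume "q = []"
    then have "{Src, Tgt} \<in> H_edges E k" using gp(1) p2 by simp
    then show False using Src_edge by blast
  qed
  have nS: "Src \<notin> set q" and nT: "Tgt \<notin> set q" using gp(3) p2 by auto
  have allCp: "\<forall>z\<in>set q. \<exists>v c. z = Cp v c \<and> v \<in> V"
  proof
    fix z assume z: "z \<in> set q"
    then have "z \<in> H_verts V" using gp(2) p2 by auto
    then show "\<exists>v c. z = Cp v c \<and> v \<in> V" using z nS nT by (auto simp: H_verts_def)
  qed
  have e1: "{Src, hd q} \<in> H_edges E k" and g2: "gw (H_edges E k) (q @ [Tgt])"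
    using gp(1) p2 qne by (auto simp: gw_Cons)
  have l1: "last q = hd [last q, Tgt]" by simp
  have qT: "q @ [Tgt] = glue q [last q, Tgt]" by (simp add: glue_def)
  note P = glue_props[OF qne _ l1, of "H_edges E k", simplified]
  have gq: "gw (H_edges E k) q" and e2: "{last q, Tgt} \<in> H_edges E k" using P g2 qT by auto
  have hq: "hd q = Cp k 0" using Src_edge[OF e1] .
  have lq: "last q = Cp k 1" using Tgt_edge[OF e2] .
  have PP: "gw E (map proj q) \<and> int (bc (last q)) mod 3 = (int (bc (hd q)) + wsum (map proj q)) mod 3"
    using proj_props[OF gq _ qne] allCp by blast
  have w: "wsum (map proj q) mod 3 \<noteq> 0" using PP hq lq by simp
  have s: "set (map proj q) \<subseteq> V" using allCp by auto
  have h: "hd (map proj q) = last (map proj q)" using hq lq qne by (simp add: hd_map last_map)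
  show ?thesis using closed_cycle[OF ug] PP s h w qne by auto
qed

theorem lemma1:
  fixes V :: "int set" and E :: "int set set" and k :: int
  assumes "finite V" and "ugraph V E" and "connected_graph V E" and "k \<in> V"
  shows "((\<exists>p. is_path (H_verts V) (H_edges E k) p \<and> hd p = Src \<and> last p = Tgt)
            \<longleftrightarrow> (\<exists>cs. is_cycle V E cs \<and> cycle_D cs mod 3 \<noteq> 0))
         \<and> (\<forall>cs. is_cycle V E cs \<and> cycle_D cs mod 3 \<noteq> 0 \<and> k \<in> set cs \<longrightarrow>
              (\<exists>p. is_path (H_verts V) (H_edges E k) p \<and> hd p = Src \<and> last p = Tgt
                   \<and> length p - 1 \<le> 2 * length cs + 2))"
proof (intro conjI iffI allI impI)
  assume "\<exists>p. is_path (H_verts V) (H_edges E k) p \<and> hd p = Src \<and> last p = Tgt"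
  then show "\<exists>cs. is_cycle V E cs \<and> cycle_D cs mod 3 \<noteq> 0" using H_to_G[OF assms(2)] by blast
next
  fix cs assume a: "is_cycle V E cs \<and> cycle_D cs mod 3 \<noteq> 0 \<and> k \<in> set cs"
  then obtain W where W: "gw E W \<and> set W \<subseteq> V \<and> W \<noteq> [] \<and> hd W = k \<and> last W = k \<and> wsum W mod 3 = 1
           \<and> length W \<le> 2 * length cs + 1" using cyc_walk by blast
  then obtain p where "is_path (H_verts V) (H_edges E k) p \<and> hd p = Src \<and> last p = Tgt \<and> length p \<le> length W + 2"
    using H_path[OF assms(2)] by blast
  then show "\<exists>p. is_path (H_verts V) (H_edges E k) p \<and> hd p = Src \<and> last p = Tgt
                   \<and> length p - 1 \<le> 2 * length cs + 2" using W by (intro exI[of _ p]) auto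
next
  assume "\<exists>cs. is_cycle V E cs \<and> cycle_D cs mod 3 \<noteq> 0"
  then obtain cs where cs: "is_cycle V E cs" "cycle_D cs mod 3 \<noteq> 0" by blast
  have ne: "cs \<noteq> []" using cs by (auto simp: is_cycle_def)
  define x where "x = hd cs"
  have xV: "x \<in> V" "x \<in> set cs" using cs ne by (auto simp: x_def is_cycle_def)
  obtain W where W: "gw E W" "set W \<subseteq> V" "W \<noteq> []" "hd W = x" "last W = x" "wsum W mod 3 = 1"
    using cyc_walk[OF cs xV(2)] by blast
  obtain P where P: "is_walk V E P" "hd P = k" "last P = x"
    using assms(3,4) xV unfolding connected_graph_def by blast
  have gP: "gw E P" "set P \<subseteq> V" "P \<noteq> []" using P by (auto simp: is_walk_iff)
  have l1: "last P = hd W" using P W by simp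
  note G1 = glue_props[OF gP(3) W(3) l1, of E]
  have w1: "wsum (glue P W) = wsum P + wsum W" using glue_wsum[OF gP(3) W(3) l1] .
  have n1: "glue P W \<noteq> []" using gP by (simp add: glue_def)
  have nr: "rev P \<noteq> []" using gP by simp
  have l2: "last (glue P W) = hd (rev P)" using G1 W P by (simp add: hd_rev)
  note G2 = glue_props[OF n1 nr l2, of E]
  have RP: "gw E (rev P) \<and> wsum (rev P) = - wsum P" using rev_walk[OF assms(2) gP(1)] .
  have w2: "wsum (glue (glue P W) (rev P)) = wsum W" using glue_wsum[OF n1 nr l2] w1 RP by simp
  have "\<exists>p. is_path (H_verts V) (H_edges E k) p \<and> hd p = Src \<and> last p = Tgt
        \<and> length p \<le> length (glue (glue P W) (rev P)) + 2"
    apply (rule H_path[OF assms(2)])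
    using G1 G2 RP gP W w2 P n1 by (auto simp: last_rev glue_def)
  then show "\<exists>p. is_path (H_verts V) (H_edges E k) p \<and> hd p = Src \<and> last p = Tgt" by blast
qed

end
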